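(* Let $\mathbb{E}$ be a finitely complete category, $\Sigma$ a point-congruous class of split epimorphisms, and suppose $\mathbb{E}$ is a $\Sigma$-Mal'tsev category. Let reflexive graphs $(d_0,d_1\colon X_1\rightrightarrows X_0,s_0)$ and $(d_0',d_1'\colon X_1'\rightrightarrows X_0',s_0')$ be given, together with a split epimorphism of reflexive graphs, i.e. split epimorphisms $(g_1,t_1)\colon X_1\rightleftarrows X_1'$ and $(g_0,t_0)\colon X_0\rightleftarrows X_0'$ such that $g_1,g_0$ and $t_1,t_0$ each commute with $d_0$, $d_1$ and $s_0$. Suppose $(g_0,t_0)\in\Sigma$. If the square $g_0d_0=d_0'g_1$ is a pullback, then the square $g_0d_1=d_1'g_1$ is a pullback as well.
   Context: A split epimorphism is a pair $(f,s)$ with $fs=1$. A class $\Sigma$ of split epimorphisms is fibrational if it contains all split epimorphisms $(f,s)$ with $f$ invertible and is stable under pullback along any morphism; it is point-congruous if moreover the full subcategory $\Sigma(\mathbb{E})$ of the category $\mathrm{Pt}(\mathbb{E})$ of split epimorphisms (with commuting squares as morphisms) is closed under finite limits in $\mathrm{Pt}(\mathbb{E})$. A pair of morphisms with common codomain $Z$ is jointly extremally epic if it factors jointly through no non-invertible monomorphism into $Z$. $\mathbb{E}$ is $\Sigma$-Mal'tsev if for every split epimorphism $(f,s)\colon X\rightleftarrows Y$ in $\Sigma$ and every split epimorphism $(g,t)$ with $g\colon Y'\to Y$, letting $X'=Y'\times_YX$, $s'=(1_{Y'},sg)$, $\bar t=(tf,1_X)$, the pair $(s',\bar t)$ is jointly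 extremally epic. *)

theory Defs
  imports Main
begin

record ('o, 'a) category =
  Obj :: "'o set"
  Arr :: "'a set"
  Dom :: "'a \<Rightarrow> 'o"
  Cod :: "'a \<Rightarrow> 'o"
  Idt :: "'o \<Rightarrow> 'a"
  Comp :: "'a \<Rightarrow> 'a \<Rightarrow> 'a"   (* Comp C g f = g \<circ> f *)

definition hom :: "('o, 'a, 'm) category_scheme \<Rightarrow> 'a \<Rightarrow> 'o \<Rightarrow> 'o \<Rightarrow> bool" where
  "hom C f A B \<longleftrightarrow> f \<in> Arr C \<and> Dom C f = A \<and> Cod C f = B"

definition is_category :: "('o, 'a, 'm) category_scheme \<Rightarrow> bool" where
  "is_category C \<longleftrightarrow>
     (\<forall>f\<in>Arr C. Dom C f \<in> Obj C \<and> Cod C f \<in> Obj C) \<and>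
     (\<forall>A\<in>Obj C. hom C (Idt C A) A A) \<and>
     (\<forall>f g. f \<in> Arr C \<and> g \<in> Arr C \<and> Cod C f = Dom C g \<longrightarrow>
        hom C (Comp C g f) (Dom C f) (Cod C g)) \<and>
     (\<forall>f\<in>Arr C. Comp C (Idt C (Cod C f)) f = f \<and> Comp C f (Idt C (Dom C f)) = f) \<and>
     (\<forall>f g h. f \<in> Arr C \<and> g \<in> Arr C \<and> h \<in> Arr C \<and> Cod C f = Dom C g \<and> Cod C g = Dom C h
        \<longrightarrow> Comp C h (Comp C g f) = Comp C (Comp C h g) f)"

definition mono :: "('o, 'a, 'm) category_scheme \<Rightarrow> 'a \<Rightarrow> bool" where
  "mono C m \<longleftrightarrow> m \<in> Arr C \<and>
     (\<forall>x y. x \<in> Arr C \<and> y \<in> Arr C \<and> Dom C x = Dom C y \<and> Cod C x = Dom C m \<and> Cod C y = Dom C m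
        \<and> Comp C m x = Comp C m y \<longrightarrow> x = y)"

definition iso :: "('o, 'a, 'm) category_scheme \<Rightarrow> 'a \<Rightarrow> bool" where
  "iso C f \<longleftrightarrow> f \<in> Arr C \<and>
     (\<exists>g. hom C g (Cod C f) (Dom C f) \<and> Comp C g f = Idt C (Dom C f) \<and> Comp C f g = Idt C (Cod C f))"

definition split_epi :: "('o, 'a, 'm) category_scheme \<Rightarrow> 'a \<Rightarrow> 'a \<Rightarrow> bool" where
  "split_epi C f s \<longleftrightarrow> f \<in> Arr C \<and> hom C s (Cod C f) (Dom C f) \<and> Comp C f s = Idt C (Cod C f)"

definition is_pullback :: "('o, 'a, 'm) category_scheme \<Rightarrow> 'a \<Rightarrow> 'a \<Rightarrow> 'a \<Rightarrow> 'a \<Rightarrow> bool" where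
  "is_pullback C f g p q \<longleftrightarrow>
     f \<in> Arr C \<and> g \<in> Arr C \<and> p \<in> Arr C \<and> q \<in> Arr C \<and>
     Cod C f = Cod C g \<and> Cod C p = Dom C f \<and> Cod C q = Dom C g \<and> Dom C p = Dom C q \<and>
     Comp C f p = Comp C g q \<and>
     (\<forall>x y. x \<in> Arr C \<and> y \<in> Arr C \<and> Dom C x = Dom C y \<and> Cod C x = Dom C f \<and> Cod C y = Dom C g
        \<and> Comp C f x = Comp C g y \<longrightarrow>
        (\<exists>!u. hom C u (Dom C x) (Dom C p) \<and> Comp C p u = x \<and> Comp C q u = y))"

definition is_terminal :: "('o, 'a, 'm) category_scheme \<Rightarrow> 'o \<Rightarrow> bool" where
  "is_terminal C T \<longleftrightarrow> T \<in> Obj C \<and> (\<forall>A\<in>Obj C. \<exists>!u. hom C u A T)"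

text \<open>Finitely complete: terminal object and all pullbacks (equivalent to all finite limits).\<close>
definition finitely_complete :: "('o, 'a, 'm) category_scheme \<Rightarrow> bool" where
  "finitely_complete C \<longleftrightarrow> (\<exists>T. is_terminal C T) \<and>
     (\<forall>f g. f \<in> Arr C \<and> g \<in> Arr C \<and> Cod C f = Cod C g \<longrightarrow> (\<exists>p q. is_pullback C f g p q))"

text \<open>Objects: pairs (f,s) with f s = 1.  Arrows: (source, target, (a,b)) with
  a on the domain parts, b on the codomain parts, f' a = b f and a s = s' b.\<close>
definition Pt :: "('o, 'a, 'm) category_scheme \<Rightarrow>
    ('a \<times> 'a, ('a \<times> 'a) \<times> ('a \<times> 'a) \<times> ('a \<times> 'a)) category" where
  "Pt C = \<lparr> Obj = {(f, s). split_epi C f s},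
     Arr = {((f, s), (f', s'), (a, b)). split_epi C f s \<and> split_epi C f' s' \<and>
               hom C a (Dom C f) (Dom C f') \<and> hom C b (Cod C f) (Cod C f') \<and>
               Comp C f' a = Comp C b f \<and> Comp C a s = Comp C s' b},
     Dom = (\<lambda>(P, Q, _). P),
     Cod = (\<lambda>(P, Q, _). Q),
     Idt = (\<lambda>(f, s). ((f, s), (f, s), (Idt C (Dom C f), Idt C (Cod C f)))),
     Comp = (\<lambda>(Q', R, (a', b')) (P, Q, (a, b)). (P, R, (Comp C a' a, Comp C b' b))) \<rparr>"

definition fibrational :: "('o, 'a, 'm) category_scheme \<Rightarrow> ('a \<times> 'a) set \<Rightarrow> bool" where
  "fibrational C \<Sigma> \<longleftrightarrow>
     \<Sigma> \<subseteq> {(f, s). split_epi C f s} \<and>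
     (\<forall>f s. split_epi C f s \<and> iso C f \<longrightarrow> (f, s) \<in> \<Sigma>) \<and>
     (\<forall>f s g p q s'. (f, s) \<in> \<Sigma> \<and> is_pullback C f g p q \<and>
        hom C s' (Dom C g) (Dom C p) \<and> Comp C p s' = Comp C s g \<and> Comp C q s' = Idt C (Dom C g)
        \<longrightarrow> (q, s') \<in> \<Sigma>)"

text \<open>Closed under finite limits in Pt(E): contains the terminal objects of Pt(E) and
  every pullback in Pt(E) of a cospan of objects of \<Sigma>.\<close>
definition point_congruous :: "('o, 'a, 'm) category_scheme \<Rightarrow> ('a \<times> 'a) set \<Rightarrow> bool" where
  "point_congruous C \<Sigma> \<longleftrightarrow> fibrational C \<Sigma> \<and>
     (\<forall>T. is_terminal (Pt C) T \<longrightarrow> T \<in> \<Sigma>) \<and>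
     (\<forall>\<alpha> \<beta> \<pi> \<rho>. is_pullback (Pt C) \<alpha> \<beta> \<pi> \<rho> \<and>
        Dom (Pt C) \<alpha> \<in> \<Sigma> \<and> Dom (Pt C) \<beta> \<in> \<Sigma> \<and> Cod (Pt C) \<alpha> \<in> \<Sigma> \<longrightarrow> Dom (Pt C) \<pi> \<in> \<Sigma>)"

definition jointly_extremally_epic :: "('o, 'a, 'm) category_scheme \<Rightarrow> 'a \<Rightarrow> 'a \<Rightarrow> bool" where
  "jointly_extremally_epic C a b \<longleftrightarrow> a \<in> Arr C \<and> b \<in> Arr C \<and> Cod C a = Cod C b \<and>
     (\<forall>m a' b'. mono C m \<and> Cod C m = Cod C a \<and>
        hom C a' (Dom C a) (Dom C m) \<and> hom C b' (Dom C b) (Dom C m) \<and>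
        Comp C m a' = a \<and> Comp C m b' = b \<longrightarrow> iso C m)"

definition sigma_maltsev :: "('o, 'a, 'm) category_scheme \<Rightarrow> ('a \<times> 'a) set \<Rightarrow> bool" where
  "sigma_maltsev C \<Sigma> \<longleftrightarrow>
     (\<forall>f s g t p q s' tb. (f, s) \<in> \<Sigma> \<and> split_epi C g t \<and> Cod C g = Cod C f \<and>
        is_pullback C g f p q \<and>
        hom C s' (Dom C g) (Dom C p) \<and> Comp C p s' = Idt C (Dom C g) \<and> Comp C q s' = Comp C s g \<and>
        hom C tb (Dom C f) (Dom C p) \<and> Comp C p tb = Comp C t f \<and> Comp C q tb = Idt C (Dom C f)
        \<longrightarrow> jointly_extremally_epic C s' tb)"

definition reflexive_graph :: "('o, 'a, 'm) category_scheme \<Rightarrow> 'a \<Rightarrow> 'a \<Rightarrow> 'a \<Rightarrow> 'o \<Rightarrow> 'o \<Rightarrow> bool" where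
  "reflexive_graph C d0 d1 s0 X1 X0 \<longleftrightarrow>
     hom C d0 X1 X0 \<and> hom C d1 X1 X0 \<and> hom C s0 X0 X1 \<and>
     Comp C d0 s0 = Idt C X0 \<and> Comp C d1 s0 = Idt C X0"

end

theory Submission
  imports Defs
begin


locale cat =
  fixes C :: "('o,'a,'m) category_scheme"
  assumes is_cat: "is_category C"
begin

lemma hom_arr: "hom C f A B \<Longrightarrow> f \<in> Arr C" by (simp add: hom_def)
lemma hom_dom: "hom C f A B \<Longrightarrow> Dom C f = A" by (simp add: hom_def)
lemma hom_cod: "hom C f A B \<Longrightarrow> Cod C f = B" by (simp add: hom_def)
lemma arr_obj: "\<forall>f\<in>Arr C. Dom C f \<in> Obj C \<and> Cod C f \<in> Obj C"
  using is_cat unfolding is_category_def by (elim conjE)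
lemma hom_objD: "hom C f A B \<Longrightarrow> A \<in> Obj C" using arr_obj unfolding hom_def by auto
lemma hom_objC: "hom C f A B \<Longrightarrow> B \<in> Obj C" using arr_obj unfolding hom_def by auto
lemma comp_hom: "hom C f A B \<Longrightarrow> hom C g B D \<Longrightarrow> hom C (Comp C g f) A D"
proof -
  assume a: "hom C f A B" "hom C g B D"
  have "\<forall>f g. f \<in> Arr C \<and> g \<in> Arr C \<and> Cod C f = Dom C g \<longrightarrow>
        hom C (Comp C g f) (Dom C f) (Cod C g)" using is_cat unfolding is_category_def by blast
  then show ?thesis using a unfolding hom_def by auto
qed
lemma id_hom: "A \<in> Obj C \<Longrightarrow> hom C (Idt C A) A A"
  using is_cat unfolding is_category_def by blast
lemma id_homD: "hom C f A B \<Longrightarrow> hom C (Idt C A) A A" by (rule id_hom[OF hom_objD])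
lemma id_homC: "hom C f A B \<Longrightarrow> hom C (Idt C B) B B" by (rule id_hom[OF hom_objC])
lemma id_l: "hom C f A B \<Longrightarrow> Comp C (Idt C B) f = f"
proof -
  assume a: "hom C f A B"
  have "\<forall>f\<in>Arr C. Comp C (Idt C (Cod C f)) f = f \<and> Comp C f (Idt C (Dom C f)) = f"
    using is_cat unfolding is_category_def by blast
  then show ?thesis using a unfolding hom_def by auto
qed
lemma id_r: "hom C f A B \<Longrightarrow> Comp C f (Idt C A) = f"
proof -
  assume a: "hom C f A B"
  have "\<forall>f\<in>Arr C. Comp C (Idt C (Cod C f)) f = f \<and> Comp C f (Idt C (Dom C f)) = f"
    using is_cat unfolding is_category_def by blast
  then show ?thesis using a unfolding hom_def by auto
qed
lemma assoc: "hom C f A B \<Longrightarrow> hom C g B D \<Longrightarrow> hom C h D E \<Longrightarrow>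
    Comp C (Comp C h g) f = Comp C h (Comp C g f)"
proof -
  assume a: "hom C f A B" "hom C g B D" "hom C h D E"
  have "\<forall>f g h. f \<in> Arr C \<and> g \<in> Arr C \<and> h \<in> Arr C \<and> Cod C f = Dom C g \<and> Cod C g = Dom C h
        \<longrightarrow> Comp C h (Comp C g f) = Comp C (Comp C h g) f"
    using is_cat unfolding is_category_def by blast
  then show ?thesis using a unfolding hom_def by auto
qed

definition pb where
  "pb f g p q A B Z P \<longleftrightarrow> is_pullback C f g p q \<and> hom C f A Z \<and> hom C g B Z \<and> hom C p P A \<and> hom C q P B"

lemma pbI: "is_pullback C f g p q \<Longrightarrow> hom C f A Z \<Longrightarrow> hom C g B Z \<Longrightarrow> pb f g p q A B Z (Dom C p)"
proof -
  assume a: "is_pullback C f g p q" "hom C f A Z" "hom C g B Z"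
  have "p \<in> Arr C \<and> q \<in> Arr C \<and> Cod C p = Dom C f \<and> Cod C q = Dom C g \<and> Dom C p = Dom C q"
    using a(1) unfolding is_pullback_def by (elim conjE) simp
  then show ?thesis using a unfolding pb_def hom_def by auto
qed

lemma pb_homs: assumes "pb f g p q A B Z P"
  shows "hom C f A Z" "hom C g B Z" "hom C p P A" "hom C q P B"
  using assms by (auto simp: pb_def)

lemma pb_comm: "pb f g p q A B Z P \<Longrightarrow> Comp C f p = Comp C g q"
  by (simp add: pb_def is_pullback_def)

lemma pb_ex: assumes "pb f g p q A B Z P" "hom C x W A" "hom C y W B" "Comp C f x = Comp C g y"
  shows "\<exists>u. hom C u W P \<and> Comp C p u = x \<and> Comp C q u = y"
proof -
  have U: "\<forall>x y. x \<in> Arr C \<and> y \<in> Arr C \<and> Dom C x = Dom C y \<and> Cod C x = Dom C f \<and> Cod C y = Dom C g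
        \<and> Comp C f x = Comp C g y \<longrightarrow>
        (\<exists>!u. hom C u (Dom C x) (Dom C p) \<and> Comp C p u = x \<and> Comp C q u = y)"
    using assms(1) unfolding pb_def is_pullback_def by (elim conjE)
  have hs: "hom C f A Z" "hom C g B Z" "hom C p P A" "hom C q P B" using assms(1) by (auto simp: pb_def)
  have "\<exists>!u. hom C u (Dom C x) (Dom C p) \<and> Comp C p u = x \<and> Comp C q u = y"
    apply (rule U[rule_format]) using assms(2-4) hs unfolding hom_def by auto
  then show ?thesis using assms(2) hs unfolding hom_def by auto
qed

lemma pb_uniq: assumes "pb f g p q A B Z P" "hom C u W P" "hom C v W P"
    "Comp C p u = Comp C p v" "Comp C q u = Comp C q v"
  shows "u = v"
proof -
  have h: "hom C (Comp C p u) W A" "hom C (Comp C q u) W B"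
    using assms by (auto simp: pb_def intro: comp_hom)
  have e: "Comp C f (Comp C p u) = Comp C g (Comp C q u)"
    using assoc[OF assms(2) pb_homs(3)[OF assms(1)] pb_homs(1)[OF assms(1)]]
      assoc[OF assms(2) pb_homs(4)[OF assms(1)] pb_homs(2)[OF assms(1)]] pb_comm[OF assms(1)] by simp
  have U: "\<forall>x y. x \<in> Arr C \<and> y \<in> Arr C \<and> Dom C x = Dom C y \<and> Cod C x = Dom C f \<and> Cod C y = Dom C g
        \<and> Comp C f x = Comp C g y \<longrightarrow>
        (\<exists>!u. hom C u (Dom C x) (Dom C p) \<and> Comp C p u = x \<and> Comp C q u = y)"
    using assms(1) unfolding pb_def is_pullback_def by (elim conjE)
  have hs: "hom C f A Z" "hom C g B Z" "hom C p P A" "hom C q P B" using assms(1) by (auto simp: pb_def)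
  have "\<exists>!w. hom C w (Dom C (Comp C p u)) (Dom C p) \<and> Comp C p w = Comp C p u \<and> Comp C q w = Comp C q u"
    apply (rule U[rule_format]) using h e hs unfolding hom_def by auto
  moreover have "Dom C (Comp C p u) = W" "Dom C p = P" using h hs by (auto simp: hom_def)
  ultimately show ?thesis using assms(2-5) by auto
qed

lemma is_pb_sym: assumes "is_pullback C f g p q" shows "is_pullback C g f q p"
proof -
  have U: "\<forall>x y. x \<in> Arr C \<and> y \<in> Arr C \<and> Dom C x = Dom C y \<and> Cod C x = Dom C f \<and> Cod C y = Dom C g
        \<and> Comp C f x = Comp C g y \<longrightarrow>
        (\<exists>!u. hom C u (Dom C x) (Dom C p) \<and> Comp C p u = x \<and> Comp C q u = y)"
    using assms unfolding is_pullback_def by blast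
  have D: "Dom C p = Dom C q" using assms unfolding is_pullback_def by blast
  have "\<forall>x y. x \<in> Arr C \<and> y \<in> Arr C \<and> Dom C x = Dom C y \<and> Cod C x = Dom C g \<and> Cod C y = Dom C f
        \<and> Comp C g x = Comp C f y \<longrightarrow>
        (\<exists>!u. hom C u (Dom C x) (Dom C q) \<and> Comp C q u = x \<and> Comp C p u = y)"
  proof (intro allI impI)
    fix x y assume h: "x \<in> Arr C \<and> y \<in> Arr C \<and> Dom C x = Dom C y \<and> Cod C x = Dom C g \<and> Cod C y = Dom C f
        \<and> Comp C g x = Comp C f y"
    then have "\<exists>!u. hom C u (Dom C y) (Dom C p) \<and> Comp C p u = y \<and> Comp C q u = x"
      using U[rule_format, of y x] by auto
    then show "\<exists>!u. hom C u (Dom C x) (Dom C q) \<and> Comp C q u = x \<and> Comp C p u = y" using h D by auto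
  qed
  then show ?thesis using assms unfolding is_pullback_def by auto
qed

lemma pb_sym: "pb f g p q A B Z P \<Longrightarrow> pb g f q p B A Z P"
  unfolding pb_def using is_pb_sym by blast

lemma pb_exists: assumes "finitely_complete C" "hom C f A Z" "hom C g B Z"
  shows "\<exists>P p q. pb f g p q A B Z P"
proof -
  obtain p q where "is_pullback C f g p q" using assms unfolding finitely_complete_def hom_def by metis
  then show ?thesis using pbI assms by blast
qed

lemma comp_arr: "f \<in> Arr C \<Longrightarrow> g \<in> Arr C \<Longrightarrow> Cod C f = Dom C g \<Longrightarrow> Comp C g f \<in> Arr C"
  using comp_hom[of f "Dom C f" "Cod C f" g "Cod C g"] by (simp add: hom_def)
lemma comp_dom: "f \<in> Arr C \<Longrightarrow> g \<in> Arr C \<Longrightarrow> Cod C f = Dom C g \<Longrightarrow> Dom C (Comp C g f) = Dom C f"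
  using comp_hom[of f "Dom C f" "Cod C f" g "Cod C g"] by (simp add: hom_def)
lemma comp_cod: "f \<in> Arr C \<Longrightarrow> g \<in> Arr C \<Longrightarrow> Cod C f = Dom C g \<Longrightarrow> Cod C (Comp C g f) = Cod C g"
  using comp_hom[of f "Dom C f" "Cod C f" g "Cod C g"] by (simp add: hom_def)
lemma assocA: "f \<in> Arr C \<Longrightarrow> g \<in> Arr C \<Longrightarrow> h \<in> Arr C \<Longrightarrow> Cod C f = Dom C g \<Longrightarrow> Cod C g = Dom C h \<Longrightarrow>
   Comp C (Comp C h g) f = Comp C h (Comp C g f)"
  using assoc[of f "Dom C f" "Cod C f" g "Cod C g" h "Cod C h"] by (simp add: hom_def)
lemma idlA: "f \<in> Arr C \<Longrightarrow> Cod C f = B \<Longrightarrow> Comp C (Idt C B) f = f"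
  using id_l[of f "Dom C f" "Cod C f"] by (simp add: hom_def)
lemma idrA: "f \<in> Arr C \<Longrightarrow> Dom C f = A \<Longrightarrow> Comp C f (Idt C A) = f"
  using id_r[of f "Dom C f" "Cod C f"] by (simp add: hom_def)
lemma appl: "Comp C g f = Comp C g' f' \<Longrightarrow> x \<in> Arr C \<Longrightarrow> f \<in> Arr C \<Longrightarrow> g \<in> Arr C \<Longrightarrow> f' \<in> Arr C \<Longrightarrow> g' \<in> Arr C
  \<Longrightarrow> Cod C x = Dom C f \<Longrightarrow> Cod C f = Dom C g \<Longrightarrow> Cod C x = Dom C f' \<Longrightarrow> Cod C f' = Dom C g'
  \<Longrightarrow> Comp C g (Comp C f x) = Comp C g' (Comp C f' x)"
  by (metis assocA)

lemma appl1: "Comp C g f = h \<Longrightarrow> x \<in> Arr C \<Longrightarrow> f \<in> Arr C \<Longrightarrow> g \<in> Arr C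
  \<Longrightarrow> Cod C x = Dom C f \<Longrightarrow> Cod C f = Dom C g \<Longrightarrow> Comp C g (Comp C f x) = Comp C h x"
  by (metis assocA)

lemmas cs = comp_arr comp_dom comp_cod assocA idlA idrA

lemma pb_is: "pb f g p q A B Z P \<Longrightarrow> is_pullback C f g p q" by (simp add: pb_def)

end


context cat
begin

lemma Pt_Dom[simp]: "Dom (Pt C) (S, T, ab) = S" by (simp add: Pt_def)
lemma Pt_Cod[simp]: "Cod (Pt C) (S, T, ab) = T" by (simp add: Pt_def)
lemma Pt_Comp[simp]: "Comp (Pt C) (Q', R, (a', b')) (S, Q, (a, b)) = (S, R, (Comp C a' a, Comp C b' b))"
  by (simp add: Pt_def)
lemma Pt_Arr: "((f, s), (f', s'), (a, b)) \<in> Arr (Pt C) \<longleftrightarrow> split_epi C f s \<and> split_epi C f' s' \<and>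
               hom C a (Dom C f) (Dom C f') \<and> hom C b (Cod C f) (Cod C f') \<and>
               Comp C f' a = Comp C b f \<and> Comp C a s = Comp C s' b"
  by (simp add: Pt_def)

lemma pt_sigma:
  fixes \<Sigma> :: "('a \<times> 'a) set"
  assumes pc: "point_congruous C \<Sigma>"
  and S1: "(g1, t1) \<in> \<Sigma>" and SP: "(\<pi>1, \<sigma>) \<in> \<Sigma>"
  and g1: "hom C g1 X1 Y" and t1: "hom C t1 Y X1" and g1t1: "Comp C g1 t1 = Idt C Y"
  and \<pi>1: "hom C \<pi>1 P Y" and \<sigma>: "hom C \<sigma> Y P" and \<pi>1\<sigma>: "Comp C \<pi>1 \<sigma> = Idt C Y"
  and \<phi>: "hom C \<phi> X1 P" and \<pi>1\<phi>: "Comp C \<pi>1 \<phi> = g1" and \<phi>t1: "Comp C \<phi> t1 = \<sigma>"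
  and PBK: "pb \<phi> \<phi> k1 k2 X1 X1 P K" and sK: "hom C sK Y K"
  and k1sK: "Comp C k1 sK = t1" and k2sK: "Comp C k2 sK = t1"
  shows "(Comp C g1 k1, sK) \<in> \<Sigma>"
proof -
  define fK where "fK = Comp C g1 k1"
  have k1: "hom C k1 K X1" and k2: "hom C k2 K X1" and \<phi>k: "Comp C \<phi> k1 = Comp C \<phi> k2"
    using pb_homs[OF PBK] pb_comm[OF PBK] by auto
  have Y: "Y \<in> Obj C" using g1 hom_objC by blast
  note H = g1 t1 \<pi>1 \<sigma> \<phi> k1 k2 sK id_hom[OF Y]
  have g1k: "Comp C g1 k1 = Comp C g1 k2"
  proof -
    have "Comp C g1 k1 = Comp C \<pi>1 (Comp C \<phi> k1)" using assoc[OF k1 \<phi> \<pi>1] \<pi>1\<phi> by simp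
    also have "\<dots> = Comp C \<pi>1 (Comp C \<phi> k2)" using \<phi>k by simp
    also have "\<dots> = Comp C g1 k2" using assoc[OF k2 \<phi> \<pi>1] \<pi>1\<phi> by simp
    finally show ?thesis .
  qed
  have fK: "hom C fK K Y" using fK_def k1 g1 comp_hom by blast
  have fKsK: "Comp C fK sK = Idt C Y" unfolding fK_def
    using H g1t1 by (simp add: cs hom_def k1sK appl1[OF k1sK])
  have se1: "split_epi C g1 t1" using g1 t1 g1t1 by (simp add: split_epi_def hom_def)
  have sp: "split_epi C \<pi>1 \<sigma>" using \<pi>1 \<sigma> \<pi>1\<sigma> by (simp add: split_epi_def hom_def)
  have seK: "split_epi C fK sK" using fK sK fKsK by (simp add: split_epi_def hom_def)
  define \<alpha> where "\<alpha> = ((g1, t1), (\<pi>1, \<sigma>), (\<phi>, Idt C Y))"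
  define \<pi>K where "\<pi>K = ((fK, sK), (g1, t1), (k1, Idt C Y))"
  define \<rho>K where "\<rho>K = ((fK, sK), (g1, t1), (k2, Idt C Y))"
  have a_arr: "\<alpha> \<in> Arr (Pt C)" unfolding \<alpha>_def Pt_Arr
    using se1 sp H \<pi>1\<phi> \<phi>t1 by (simp add: hom_def cs)
  have pK_arr: "\<pi>K \<in> Arr (Pt C)" unfolding \<pi>K_def Pt_Arr
    using se1 seK H fK_def k1sK by (simp add: hom_def cs)
  have rK_arr: "\<rho>K \<in> Arr (Pt C)" unfolding \<rho>K_def Pt_Arr
    using se1 seK H fK_def k2sK g1k by (simp add: hom_def cs)
  have univ: "\<exists>!u. hom (Pt C) u (Dom (Pt C) x) (Dom (Pt C) \<pi>K) \<and> Comp (Pt C) \<pi>K u = x \<and> Comp (Pt C) \<rho>K u = y"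
    if h: "x \<in> Arr (Pt C) \<and> y \<in> Arr (Pt C) \<and> Dom (Pt C) x = Dom (Pt C) y \<and> Cod (Pt C) x = Dom (Pt C) \<alpha>
        \<and> Cod (Pt C) y = Dom (Pt C) \<alpha> \<and> Comp (Pt C) \<alpha> x = Comp (Pt C) \<alpha> y" for x y
  proof -
    obtain h0 r0 T xa xb where x: "x = ((h0, r0), T, (xa, xb))" by (cases x) auto
    obtain S' T' ya yb where y: "y = (S', T', (ya, yb))" by (cases y) auto
    have T: "T = (g1, t1)" and T': "T' = (g1, t1)" and S': "S' = (h0, r0)"
      using h unfolding x y \<alpha>_def by auto
    have xA: "split_epi C h0 r0 \<and> hom C xa (Dom C h0) X1 \<and> hom C xb (Cod C h0) Y \<and>
        Comp C g1 xa = Comp C xb h0 \<and> Comp C xa r0 = Comp C t1 xb"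
      using h H unfolding x T by (simp add: Pt_Arr hom_def)
    have yA: "hom C ya (Dom C h0) X1 \<and> hom C yb (Cod C h0) Y \<and> Comp C ya r0 = Comp C t1 yb"
      using h H unfolding y T' S' by (simp add: Pt_Arr hom_def)
    have r0: "hom C r0 (Cod C h0) (Dom C h0)" and h0: "hom C h0 (Dom C h0) (Cod C h0)"
      using xA by (auto simp: split_epi_def hom_def)
    have xa: "hom C xa (Dom C h0) X1" and xb: "hom C xb (Cod C h0) Y" and ya: "hom C ya (Dom C h0) X1"
      and yb: "hom C yb (Cod C h0) Y" using xA yA by auto
    have eqs: "Comp C \<phi> xa = Comp C \<phi> ya" "Comp C (Idt C Y) xb = Comp C (Idt C Y) yb"
      using h unfolding x y T T' S' \<alpha>_def by auto
    have xbyb: "xb = yb" using eqs(2) id_l[OF xb] id_l[OF yb] by simp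
    obtain ua where ua: "hom C ua (Dom C h0) K" "Comp C k1 ua = xa" "Comp C k2 ua = ya"
      using pb_ex[OF PBK xa ya eqs(1)] by metis
    have uar: "Comp C ua r0 = Comp C sK xb"
    proof (rule pb_uniq[OF PBK comp_hom[OF r0 ua(1)] comp_hom[OF xb sK]])
      show "Comp C k1 (Comp C ua r0) = Comp C k1 (Comp C sK xb)"
        using H ua r0 xb xA by (simp add: cs hom_def appl1[OF ua(2)] appl1[OF k1sK])
      show "Comp C k2 (Comp C ua r0) = Comp C k2 (Comp C sK xb)"
        using H ua r0 xb yA xbyb by (simp add: cs hom_def appl1[OF ua(3)] appl1[OF k2sK])
    qed
    define u where "u = ((h0, r0), (fK, sK), (ua, xb))"
    have uarr: "u \<in> Arr (Pt C)" unfolding u_def Pt_Arr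
      using xA seK ua xb fK fK_def uar H by (simp add: hom_def cs appl1[OF ua(2)])
    show ?thesis
    proof (rule ex1I[of _ u])
      show "hom (Pt C) u (Dom (Pt C) x) (Dom (Pt C) \<pi>K) \<and> Comp (Pt C) \<pi>K u = x \<and> Comp (Pt C) \<rho>K u = y"
        using uarr ua xb xbyb unfolding u_def x y \<pi>K_def \<rho>K_def T T' S'
        by (simp add: hom_def id_l[OF xb] id_l[OF yb])
    next
      fix u' assume u': "hom (Pt C) u' (Dom (Pt C) x) (Dom (Pt C) \<pi>K) \<and> Comp (Pt C) \<pi>K u' = x \<and> Comp (Pt C) \<rho>K u' = y"
      obtain U1 U2 ua' ub' where u'd: "u' = (U1, U2, (ua', ub'))" by (cases u') auto
      have u'A: "u' \<in> Arr (Pt C)" and u'D: "Dom (Pt C) u' = Dom (Pt C) x" and u'C: "Cod (Pt C) u' = Dom (Pt C) \<pi>K"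
        using u' unfolding hom_def by simp_all
      have U: "U1 = (h0, r0)" "U2 = (fK, sK)" using u'D u'C unfolding u'd x \<pi>K_def by simp_all
      have "((h0, r0), (fK, sK), (ua', ub')) \<in> Arr (Pt C)" using u'A unfolding u'd U .
      then have "hom C ua' (Dom C h0) (Dom C fK) \<and> hom C ub' (Cod C h0) (Cod C fK)"
        unfolding Pt_Arr by (elim conjE) simp
      then have ua': "hom C ua' (Dom C h0) K" and ub': "hom C ub' (Cod C h0) Y"
        using hom_dom[OF fK] hom_cod[OF fK] by simp_all
      have cc: "Comp (Pt C) \<pi>K u' = x" "Comp (Pt C) \<rho>K u' = y"
        using u' by simp_all
      have c: "Comp C k1 ua' = xa" "Comp C (Idt C Y) ub' = xb" "Comp C k2 ua' = ya"
        using cc unfolding u'd U x y \<pi>K_def \<rho>K_def by simp_all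
      have "ub' = xb" using c(2) id_l[OF ub'] by simp
      moreover have "ua' = ua" using pb_uniq[OF PBK ua' ua(1)] c ua by simp
      ultimately show "u' = u" unfolding u'd U u_def by simp
    qed
  qed
  have PB: "is_pullback (Pt C) \<alpha> \<alpha> \<pi>K \<rho>K"
    unfolding is_pullback_def
  proof (intro conjI)
    show "\<forall>x y. x \<in> Arr (Pt C) \<and> y \<in> Arr (Pt C) \<and> Dom (Pt C) x = Dom (Pt C) y \<and> Cod (Pt C) x = Dom (Pt C) \<alpha>
        \<and> Cod (Pt C) y = Dom (Pt C) \<alpha> \<and> Comp (Pt C) \<alpha> x = Comp (Pt C) \<alpha> y \<longrightarrow>
        (\<exists>!u. hom (Pt C) u (Dom (Pt C) x) (Dom (Pt C) \<pi>K) \<and> Comp (Pt C) \<pi>K u = x \<and> Comp (Pt C) \<rho>K u = y)"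
      using univ by blast
  qed (use a_arr pK_arr rK_arr \<phi>k in \<open>simp_all add: \<alpha>_def \<pi>K_def \<rho>K_def\<close>)
  have PC: "\<And>a b p r. is_pullback (Pt C) a b p r \<Longrightarrow> Dom (Pt C) a \<in> \<Sigma> \<Longrightarrow> Dom (Pt C) b \<in> \<Sigma>
     \<Longrightarrow> Cod (Pt C) a \<in> \<Sigma> \<Longrightarrow> Dom (Pt C) p \<in> \<Sigma>"
    using pc unfolding point_congruous_def by blast
  have "Dom (Pt C) \<pi>K \<in> \<Sigma>" by (rule PC[OF PB]) (simp_all add: \<alpha>_def S1 SP)
  then show ?thesis by (simp add: \<pi>K_def fK_def)
qed

end


context cat
begin

lemma main:
  fixes \<Sigma> :: "('a \<times> 'a) set"
  assumes fc: "finitely_complete C"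
    and pc: "point_congruous C \<Sigma>"
    and malt: "sigma_maltsev C \<Sigma>"
    and G: "reflexive_graph C d0 d1 s0 X1 X0"
    and G': "reflexive_graph C d0' d1' s0' X1' X0'"
    and g1: "hom C g1 X1 X1'" and t1: "hom C t1 X1' X1"
    and g0: "hom C g0 X0 X0'" and t0: "hom C t0 X0' X0"
    and se1: "split_epi C g1 t1" and se0: "split_epi C g0 t0"
    and c_d0: "Comp C d0' g1 = Comp C g0 d0" and c_d1: "Comp C d1' g1 = Comp C g0 d1"
    and c_s0: "Comp C g1 s0 = Comp C s0' g0"
    and ct_d0: "Comp C d0 t1 = Comp C t0 d0'" and ct_d1: "Comp C d1 t1 = Comp C t0 d1'"
    and sig: "(g0, t0) \<in> \<Sigma>"
    and pb0: "is_pullback C g0 d0' d0 g1"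
  shows "is_pullback C g0 d1' d1 g1"
proof -
  have d0: "hom C d0 X1 X0" and d1: "hom C d1 X1 X0" and s0: "hom C s0 X0 X1"
    and d0s0: "Comp C d0 s0 = Idt C X0" and d1s0: "Comp C d1 s0 = Idt C X0"
    using G by (auto simp: reflexive_graph_def)
  have d0': "hom C d0' X1' X0'" and d1': "hom C d1' X1' X0'" and s0': "hom C s0' X0' X1'"
    and d0s0': "Comp C d0' s0' = Idt C X0'" and d1s0': "Comp C d1' s0' = Idt C X0'"
    using G' by (auto simp: reflexive_graph_def)
  have g1t1: "Comp C g1 t1 = Idt C X1'" using se1 g1 by (simp add: split_epi_def hom_def)
  have g0t0: "Comp C g0 t0 = Idt C X0'" using se0 g0 by (simp add: split_epi_def hom_def)
  have X0: "X0 \<in> Obj C" and X1: "X1 \<in> Obj C" and X0': "X0' \<in> Obj C" and X1': "X1' \<in> Obj C"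
    using g1 g0 hom_objD hom_objC by blast+
  note H0 = d0 d1 s0 d0' d1' s0' g1 t1 g0 t0 id_hom[OF X0] id_hom[OF X1] id_hom[OF X0'] id_hom[OF X1']
  have PB0: "pb g0 d0' d0 g1 X0 X1' X0' X1" using pbI[OF pb0 g0 d0'] d0 by (simp add: hom_def)
  obtain P \<pi>2 \<pi>1 where PBP: "pb g0 d1' \<pi>2 \<pi>1 X0 X1' X0' P" using pb_exists[OF fc g0 d1'] by blast
  have \<pi>1: "hom C \<pi>1 P X1'" and \<pi>2: "hom C \<pi>2 P X0" and Pc: "Comp C g0 \<pi>2 = Comp C d1' \<pi>1"
    using pb_homs[OF PBP] pb_comm[OF PBP] by auto
  obtain \<phi> where \<phi>: "hom C \<phi> X1 P" "Comp C \<pi>2 \<phi> = d1" "Comp C \<pi>1 \<phi> = g1"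
    using pb_ex[OF PBP d1 g1] c_d1 by metis
  have "Comp C g0 (Comp C t0 d1') = Comp C d1' (Idt C X1')"
    using H0 g0t0 by (simp add: cs hom_def flip: assocA)
  then obtain \<sigma> where \<sigma>: "hom C \<sigma> X1' P" "Comp C \<pi>2 \<sigma> = Comp C t0 d1'" "Comp C \<pi>1 \<sigma> = Idt C X1'"
    using pb_ex[OF PBP comp_hom[OF d1' t0] id_hom[OF X1']] by metis
  have "Comp C g0 (Idt C X0) = Comp C d1' (Comp C s0' g0)"
    using H0 d1s0' by (simp add: cs hom_def flip: assocA)
  then obtain \<tau> where \<tau>: "hom C \<tau> X0 P" "Comp C \<pi>2 \<tau> = Idt C X0" "Comp C \<pi>1 \<tau> = Comp C s0' g0"
    using pb_ex[OF PBP id_hom[OF X0] comp_hom[OF g0 s0']] by metis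
  note H1 = H0 \<pi>1 \<pi>2 \<phi>(1) \<sigma>(1) \<tau>(1)
  have \<phi>t1: "Comp C \<phi> t1 = \<sigma>"
  proof (rule pb_uniq[OF PBP comp_hom[OF t1 \<phi>(1)] \<sigma>(1)])
    show "Comp C \<pi>2 (Comp C \<phi> t1) = Comp C \<pi>2 \<sigma>" using H1 \<phi> \<sigma> ct_d1 by (simp add: cs hom_def flip: assocA)
    show "Comp C \<pi>1 (Comp C \<phi> t1) = Comp C \<pi>1 \<sigma>" using H1 \<phi> \<sigma> g1t1 by (simp add: cs hom_def flip: assocA)
  qed
  have \<phi>s0: "Comp C \<phi> s0 = \<tau>"
  proof (rule pb_uniq[OF PBP comp_hom[OF s0 \<phi>(1)] \<tau>(1)])
    show "Comp C \<pi>2 (Comp C \<phi> s0) = Comp C \<pi>2 \<tau>" using H1 \<phi> \<tau> d1s0 by (simp add: cs hom_def flip: assocA)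
    show "Comp C \<pi>1 (Comp C \<phi> s0) = Comp C \<pi>1 \<tau>" using H1 \<phi> \<tau> c_s0 by (simp add: cs hom_def flip: assocA)
  qed
  have fib: "fibrational C \<Sigma>" using pc by (simp add: point_congruous_def)
  have fib3: "\<And>f s g p q s'. (f, s) \<in> \<Sigma> \<Longrightarrow> is_pullback C f g p q \<Longrightarrow>
        hom C s' (Dom C g) (Dom C p) \<Longrightarrow> Comp C p s' = Comp C s g \<Longrightarrow> Comp C q s' = Idt C (Dom C g)
        \<Longrightarrow> (q, s') \<in> \<Sigma>" using fib unfolding fibrational_def by blast
  have S1: "(g1, t1) \<in> \<Sigma>"
    apply (rule fib3[OF sig pb0]) using H1 ct_d0 g1t1 by (simp_all add: hom_def)
  have SP: "(\<pi>1, \<sigma>) \<in> \<Sigma>"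
    apply (rule fib3[OF sig pb_is[OF PBP]]) using H1 \<sigma> by (simp_all add: hom_def)
  obtain K k1 k2 where PBK: "pb \<phi> \<phi> k1 k2 X1 X1 P K" using pb_exists[OF fc \<phi>(1) \<phi>(1)] by blast
  have k1: "hom C k1 K X1" and k2: "hom C k2 K X1" and \<phi>k: "Comp C \<phi> k1 = Comp C \<phi> k2"
    using pb_homs[OF PBK] pb_comm[OF PBK] by auto
  have g1k: "Comp C g1 k1 = Comp C g1 k2"
    using H1 k1 k2 \<phi> \<phi>k by (metis assoc)
  have d1k: "Comp C d1 k1 = Comp C d1 k2"
    using H1 k1 k2 \<phi> \<phi>k by (metis assoc)
  obtain sK where sK: "hom C sK X1' K" "Comp C k1 sK = t1" "Comp C k2 sK = t1"
    using pb_ex[OF PBK t1 t1] by metis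
  define fK where "fK = Comp C g1 k1"
  have fK: "hom C fK K X1'" using k1 g1 comp_hom fK_def by blast
  have fKsK: "Comp C fK sK = Idt C X1'" unfolding fK_def
    using H1 k1 sK g1t1 by (simp add: cs hom_def)
  have SK: "(fK, sK) \<in> \<Sigma>" unfolding fK_def
    by (rule pt_sigma[OF pc S1 SP g1 t1 g1t1 \<pi>1 \<sigma>(1) \<sigma>(3) \<phi>(1) \<phi>(3) \<phi>t1 PBK sK])
  obtain W w1 w2 where PBW: "pb d0' d0' w1 w2 X1' X1' X0' W" using pb_exists[OF fc d0' d0'] by blast
  have w1: "hom C w1 W X1'" and w2: "hom C w2 W X1'" and Wc: "Comp C d0' w1 = Comp C d0' w2"
    using pb_homs[OF PBW] pb_comm[OF PBW] by auto
  obtain \<delta> where \<delta>: "hom C \<delta> X1' W" "Comp C w1 \<delta> = Idt C X1'" "Comp C w2 \<delta> = Idt C X1'"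
    using pb_ex[OF PBW id_hom[OF X1'] id_hom[OF X1']] by metis
  have sew: "split_epi C w1 \<delta>" using w1 \<delta> by (simp add: split_epi_def hom_def)
  obtain X3 p3 q3 where PB3: "pb w1 fK p3 q3 W K X1' X3" using pb_exists[OF fc w1 fK] by blast
  have p3: "hom C p3 X3 W" and q3: "hom C q3 X3 K" and X3c: "Comp C w1 p3 = Comp C fK q3"
    using pb_homs[OF PB3] pb_comm[OF PB3] by auto
  have W: "W \<in> Obj C" and KO: "K \<in> Obj C" and X3: "X3 \<in> Obj C" using w1 k1 p3 hom_objD by blast+
  note H2 = H1 k1 k2 sK(1) fK w1 w2 \<delta>(1) p3 q3 id_hom[OF W] id_hom[OF KO] id_hom[OF X3]
  have "Comp C w1 (Idt C W) = Comp C fK (Comp C sK w1)"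
    using H2 fKsK by (simp add: cs hom_def flip: assocA)
  then obtain s3 where s3: "hom C s3 W X3" "Comp C p3 s3 = Idt C W" "Comp C q3 s3 = Comp C sK w1"
    using pb_ex[OF PB3 id_hom[OF W] comp_hom[OF w1 sK(1)]] by metis
  have "Comp C w1 (Comp C \<delta> fK) = Comp C fK (Idt C K)"
    using H2 \<delta> by (simp add: cs hom_def flip: assocA)
  then obtain tb3 where tb3: "hom C tb3 K X3" "Comp C p3 tb3 = Comp C \<delta> fK" "Comp C q3 tb3 = Idt C K"
    using pb_ex[OF PB3 comp_hom[OF fK \<delta>(1)] id_hom[OF KO]] by metis
  have JE: "jointly_extremally_epic C s3 tb3"
    apply (rule malt[unfolded sigma_maltsev_def, rule_format, of fK sK w1 \<delta> p3 q3 s3 tb3])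
    using SK sew pb_is[OF PB3] s3 tb3 w1 fK p3 by (simp add: hom_def)
  note H3 = H2 s3(1) tb3(1)
  have fK2: "fK = Comp C g1 k2" using fK_def g1k by simp
  have A1: "Comp C g0 (Comp C d0 (Comp C k1 q3)) = Comp C d0' (Comp C w2 p3)"
  proof -
    have "Comp C g0 (Comp C d0 (Comp C k1 q3)) = Comp C d0' (Comp C g1 (Comp C k1 q3))"
      using H3 c_d0 by (simp add: cs hom_def flip: assocA)
    also have "\<dots> = Comp C d0' (Comp C w1 p3)" using X3c H3 fK_def by (simp add: cs hom_def flip: assocA)
    also have "\<dots> = Comp C d0' (Comp C w2 p3)" using Wc H3 by (simp add: cs hom_def flip: assocA)
    finally show ?thesis .
  qed
  obtain \<theta>1 where \<theta>1: "hom C \<theta>1 X3 X1" "Comp C d0 \<theta>1 = Comp C d0 (Comp C k1 q3)" "Comp C g1 \<theta>1 = Comp C w2 p3"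
    using pb_ex[OF PB0 comp_hom[OF comp_hom[OF q3 k1] d0] comp_hom[OF p3 w2] A1] by metis
  have A2: "Comp C g0 (Comp C d0 (Comp C k2 q3)) = Comp C d0' (Comp C w2 p3)"
  proof -
    have "Comp C g0 (Comp C d0 (Comp C k2 q3)) = Comp C d0' (Comp C g1 (Comp C k2 q3))"
      using H3 c_d0 by (simp add: cs hom_def flip: assocA)
    also have "\<dots> = Comp C d0' (Comp C w1 p3)" using X3c H3 fK2 by (simp add: cs hom_def flip: assocA)
    also have "\<dots> = Comp C d0' (Comp C w2 p3)" using Wc H3 by (simp add: cs hom_def flip: assocA)
    finally show ?thesis .
  qed
  obtain \<theta>2 where \<theta>2: "hom C \<theta>2 X3 X1" "Comp C d0 \<theta>2 = Comp C d0 (Comp C k2 q3)" "Comp C g1 \<theta>2 = Comp C w2 p3"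
    using pb_ex[OF PB0 comp_hom[OF comp_hom[OF q3 k2] d0] comp_hom[OF p3 w2] A2] by metis
  define e1 where "e1 = Comp C d1 \<theta>1"
  define e2 where "e2 = Comp C d1 \<theta>2"
  have e1: "hom C e1 X3 X0" and e2: "hom C e2 X3 X0" using e1_def e2_def \<theta>1 \<theta>2 d1 comp_hom by blast+
  have ge: "Comp C g0 e1 = Comp C g0 e2"
  proof -
    have "Comp C g0 e1 = Comp C d1' (Comp C g1 \<theta>1)" unfolding e1_def
      using appl[OF c_d1[symmetric], of \<theta>1] H3 \<theta>1 by (simp add: hom_def)
    moreover have "Comp C g0 e2 = Comp C d1' (Comp C g1 \<theta>2)" unfolding e2_def
      using appl[OF c_d1[symmetric], of \<theta>2] H3 \<theta>2 by (simp add: hom_def)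
    ultimately show ?thesis using \<theta>1 \<theta>2 by simp
  qed
  obtain R r1 r2 where PBR: "pb g0 g0 r1 r2 X0 X0 X0' R" using pb_exists[OF fc g0 g0] by blast
  have r1: "hom C r1 R X0" and r2: "hom C r2 R X0"
    using pb_homs[OF PBR] by auto
  obtain \<Delta> where \<Delta>: "hom C \<Delta> X0 R" "Comp C r1 \<Delta> = Idt C X0" "Comp C r2 \<Delta> = Idt C X0"
    using pb_ex[OF PBR id_hom[OF X0] id_hom[OF X0]] by metis
  obtain ee where ee: "hom C ee X3 R" "Comp C r1 ee = e1" "Comp C r2 ee = e2"
    using pb_ex[OF PBR e1 e2 ge] by metis
  obtain M m n where PBM: "pb ee \<Delta> m n X3 X0 R M" using pb_exists[OF fc ee(1) \<Delta>(1)] by blast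
  have m: "hom C m M X3" and n: "hom C n M X0" and Mc: "Comp C ee m = Comp C \<Delta> n"
    using pb_homs[OF PBM] pb_comm[OF PBM] by auto
  have nm: "Comp C n x = Comp C e1 (Comp C m x)" if x: "hom C x V M" for x V
  proof -
    have "Comp C n x = Comp C r1 (Comp C \<Delta> (Comp C n x))" using \<Delta> n x r1 by (simp add: cs hom_def flip: assocA)
    also have "\<dots> = Comp C r1 (Comp C ee (Comp C m x))" using Mc \<Delta> n x r1 ee m by (simp add: cs hom_def flip: assocA)
    also have "\<dots> = Comp C e1 (Comp C m x)" using \<Delta> n x r1 ee m e1 by (simp add: cs hom_def flip: assocA)
    finally show ?thesis .
  qed
  have mono_m: "mono C m" unfolding mono_def
  proof (intro conjI allI impI)
    show "m \<in> Arr C" using m by (simp add: hom_def)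
    fix x y assume h: "x \<in> Arr C \<and> y \<in> Arr C \<and> Dom C x = Dom C y \<and> Cod C x = Dom C m \<and> Cod C y = Dom C m
        \<and> Comp C m x = Comp C m y"
    then have hx: "hom C x (Dom C x) M" and hy: "hom C y (Dom C x) M" using m by (auto simp: hom_def)
    show "x = y"
      apply (rule pb_uniq[OF PBM hx hy])
      using h nm[OF hx] nm[OF hy] by auto
  qed
  note H4 = H3 \<theta>1(1) \<theta>2(1) e1 e2 r1 r2 \<Delta>(1) ee(1) m n
  have \<theta>s3: "Comp C \<theta>1 s3 = Comp C \<theta>2 s3"
  proof (rule pb_uniq[OF PB0 comp_hom[OF s3(1) \<theta>1(1)] comp_hom[OF s3(1) \<theta>2(1)]])
    show "Comp C d0 (Comp C \<theta>1 s3) = Comp C d0 (Comp C \<theta>2 s3)"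
      using H4 by (simp add: cs hom_def \<theta>1(2) \<theta>2(2) appl1[OF \<theta>1(2)] appl1[OF \<theta>2(2)] s3 appl1[OF s3(3)]
          sK appl1[OF sK(2)] appl1[OF sK(3)])
    show "Comp C g1 (Comp C \<theta>1 s3) = Comp C g1 (Comp C \<theta>2 s3)"
      using H4 by (simp add: cs hom_def appl1[OF \<theta>1(3)] appl1[OF \<theta>2(3)])
  qed
  have \<theta>tb1: "Comp C \<theta>1 tb3 = k1"
  proof (rule pb_uniq[OF PB0 comp_hom[OF tb3(1) \<theta>1(1)] k1])
    show "Comp C d0 (Comp C \<theta>1 tb3) = Comp C d0 k1"
      using H4 by (simp add: cs hom_def appl1[OF \<theta>1(2)] tb3)
    show "Comp C g1 (Comp C \<theta>1 tb3) = Comp C g1 k1"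
      using H4 by (simp add: cs hom_def appl1[OF \<theta>1(3)] tb3 appl1[OF \<delta>(3)] fK_def)
  qed
  have \<theta>tb2: "Comp C \<theta>2 tb3 = k2"
  proof (rule pb_uniq[OF PB0 comp_hom[OF tb3(1) \<theta>2(1)] k2])
    show "Comp C d0 (Comp C \<theta>2 tb3) = Comp C d0 k2"
      using H4 by (simp add: cs hom_def appl1[OF \<theta>2(2)] tb3)
    show "Comp C g1 (Comp C \<theta>2 tb3) = Comp C g1 k2"
      using H4 by (simp add: cs hom_def appl1[OF \<theta>2(3)] tb3 appl1[OF \<delta>(3)] fK2)
  qed
  have es3: "Comp C e1 s3 = Comp C e2 s3" unfolding e1_def e2_def
    using H4 \<theta>s3 by (simp add: cs hom_def)
  have etb: "Comp C e1 tb3 = Comp C e2 tb3" unfolding e1_def e2_def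
    using H4 \<theta>tb1 \<theta>tb2 d1k by (simp add: cs hom_def)
  have fact: "\<exists>u. hom C u V M \<and> Comp C m u = z" if z: "hom C z V X3" "Comp C e1 z = Comp C e2 z" for z V
  proof -
    have "Comp C ee z = Comp C \<Delta> (Comp C e1 z)"
    proof (rule pb_uniq[OF PBR comp_hom[OF z(1) ee(1)] comp_hom[OF comp_hom[OF z(1) e1] \<Delta>(1)]])
      show "Comp C r1 (Comp C ee z) = Comp C r1 (Comp C \<Delta> (Comp C e1 z))"
        using H4 z by (simp add: cs hom_def appl1[OF ee(2)] appl1[OF \<Delta>(2)])
      show "Comp C r2 (Comp C ee z) = Comp C r2 (Comp C \<Delta> (Comp C e1 z))"
        using H4 z by (simp add: cs hom_def appl1[OF ee(3)] appl1[OF \<Delta>(3)])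
    qed
    then show ?thesis using pb_ex[OF PBM z(1) comp_hom[OF z(1) e1]] by metis
  qed
  obtain a3 where a3: "hom C a3 W M" "Comp C m a3 = s3" using fact[OF s3(1) es3] by blast
  obtain b3 where b3: "hom C b3 K M" "Comp C m b3 = tb3" using fact[OF tb3(1) etb] by blast
  have JE3: "\<forall>mm a' b'. mono C mm \<and> Cod C mm = Cod C s3 \<and>
        hom C a' (Dom C s3) (Dom C mm) \<and> hom C b' (Dom C tb3) (Dom C mm) \<and>
        Comp C mm a' = s3 \<and> Comp C mm b' = tb3 \<longrightarrow> iso C mm"
    using JE unfolding jointly_extremally_epic_def by (elim conjE)
  have iso_m: "iso C m"
    apply (rule JE3[rule_format, of m a3 b3])
    using mono_m m a3 b3 s3(1) tb3(1) by (simp add: hom_def)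
  then obtain mi where mi: "hom C mi X3 M" "Comp C m mi = Idt C X3"
    using m unfolding iso_def hom_def by auto
  have e12: "e1 = e2"
  proof -
    have "e1 = Comp C e1 (Comp C m mi)" using mi e1 by (simp add: cs hom_def)
    also have "\<dots> = Comp C n mi" using nm[OF mi(1)] by simp
    also have "\<dots> = Comp C r2 (Comp C \<Delta> (Comp C n mi))" using H4 mi by (simp add: cs hom_def appl1[OF \<Delta>(3)])
    also have "\<dots> = Comp C r2 (Comp C ee (Comp C m mi))" using H4 mi by (simp add: cs hom_def appl1[OF Mc[symmetric]])
    also have "\<dots> = e2" using H4 mi by (simp add: cs hom_def ee(3) appl1[OF ee(3)])
    finally show ?thesis .
  qed
  have mono_phi: "mono C \<phi>" unfolding mono_def
  proof (intro conjI allI impI)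
    show "\<phi> \<in> Arr C" using \<phi> by (simp add: hom_def)
    fix x y assume h: "x \<in> Arr C \<and> y \<in> Arr C \<and> Dom C x = Dom C y \<and> Cod C x = Dom C \<phi> \<and> Cod C y = Dom C \<phi>
        \<and> Comp C \<phi> x = Comp C \<phi> y"
    define V where "V = Dom C x"
    have hx: "hom C x V X1" and hy: "hom C y V X1" using h \<phi> by (auto simp: hom_def V_def)
    have xy: "Comp C \<phi> x = Comp C \<phi> y" using h by simp
    have g1xy: "Comp C g1 x = Comp C g1 y"
      using H4 hx hy xy by (metis \<phi>(3) assoc)
    obtain \<kappa> where \<kappa>: "hom C \<kappa> V K" "Comp C k1 \<kappa> = x" "Comp C k2 \<kappa> = y"
      using pb_ex[OF PBK hx hy xy] by metis
    define a where "a = Comp C g1 x"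
    have a: "hom C a V X1'" using a_def hx g1 comp_hom by blast
    have "Comp C d0' a = Comp C d0' (Comp C s0' (Comp C d0' a))"
      using H4 a by (simp add: cs hom_def appl1[OF d0s0'])
    then obtain z where z: "hom C z V W" "Comp C w1 z = a" "Comp C w2 z = Comp C s0' (Comp C d0' a)"
      using pb_ex[OF PBW a comp_hom[OF comp_hom[OF a d0'] s0']] by metis
    have "Comp C w1 z = Comp C fK \<kappa>" using z a_def fK_def H4 \<kappa> by (simp add: cs hom_def)
    then obtain \<zeta> where \<zeta>: "hom C \<zeta> V X3" "Comp C p3 \<zeta> = z" "Comp C q3 \<zeta> = \<kappa>"
      using pb_ex[OF PB3 z(1) \<kappa>(1)] by metis
    note H5 = H4 hx hy \<kappa>(1) a z(1) \<zeta>(1)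
    have t1z: "Comp C \<theta>1 \<zeta> = Comp C s0 (Comp C d0 x)"
    proof (rule pb_uniq[OF PB0 comp_hom[OF \<zeta>(1) \<theta>1(1)] comp_hom[OF comp_hom[OF hx d0] s0]])
      show "Comp C d0 (Comp C \<theta>1 \<zeta>) = Comp C d0 (Comp C s0 (Comp C d0 x))"
        using H5 by (simp add: cs hom_def appl1[OF \<theta>1(2)] appl1[OF d0s0] \<zeta> appl1[OF \<kappa>(2)] \<kappa>)
      show "Comp C g1 (Comp C \<theta>1 \<zeta>) = Comp C g1 (Comp C s0 (Comp C d0 x))"
        using H5 by (simp add: cs hom_def appl1[OF \<theta>1(3)] appl1[OF c_s0] \<zeta> appl1[OF z(3)] z a_def
            appl1[OF c_d0[symmetric]])
    qed
    have t2z: "Comp C \<theta>2 \<zeta> = Comp C s0 (Comp C d0 y)"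
    proof (rule pb_uniq[OF PB0 comp_hom[OF \<zeta>(1) \<theta>2(1)] comp_hom[OF comp_hom[OF hy d0] s0]])
      show "Comp C d0 (Comp C \<theta>2 \<zeta>) = Comp C d0 (Comp C s0 (Comp C d0 y))"
        using H5 by (simp add: cs hom_def appl1[OF \<theta>2(2)] appl1[OF d0s0] \<zeta> appl1[OF \<kappa>(3)] \<kappa>)
      show "Comp C g1 (Comp C \<theta>2 \<zeta>) = Comp C g1 (Comp C s0 (Comp C d0 y))"
        using H5 g1xy by (simp add: cs hom_def appl1[OF \<theta>2(3)] appl1[OF c_s0] \<zeta> appl1[OF z(3)] z a_def
            appl1[OF c_d0[symmetric]])
    qed
    have "Comp C e1 \<zeta> = Comp C e2 \<zeta>" using e12 by simp
    then have "Comp C d1 (Comp C s0 (Comp C d0 x)) = Comp C d1 (Comp C s0 (Comp C d0 y))"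
      unfolding e1_def e2_def using H5 t1z t2z by (simp add: cs hom_def)
    then have d0xy: "Comp C d0 x = Comp C d0 y"
      using H5 by (simp add: cs hom_def appl1[OF d1s0])
    show "x = y" by (rule pb_uniq[OF PB0 hx hy d0xy g1xy])
  qed
  have JEP: "jointly_extremally_epic C \<sigma> \<tau>"
    apply (rule malt[unfolded sigma_maltsev_def, rule_format, of g0 t0 d1' s0' \<pi>1 \<pi>2 \<sigma> \<tau>])
    using sig d1' s0' d1s0' g0 pb_is[OF pb_sym[OF PBP]] \<sigma> \<tau> \<pi>1 by (simp add: hom_def split_epi_def)
  have JEP3: "\<forall>mm a' b'. mono C mm \<and> Cod C mm = Cod C \<sigma> \<and>
        hom C a' (Dom C \<sigma>) (Dom C mm) \<and> hom C b' (Dom C \<tau>) (Dom C mm) \<and>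
        Comp C mm a' = \<sigma> \<and> Comp C mm b' = \<tau> \<longrightarrow> iso C mm"
    using JEP unfolding jointly_extremally_epic_def by (elim conjE)
  have iso_phi: "iso C \<phi>"
    apply (rule JEP3[rule_format, of \<phi> t1 s0])
    using mono_phi \<phi>(1) \<phi>t1 \<phi>s0 \<sigma>(1) \<tau>(1) t1 s0 by (simp add: hom_def)
  then obtain \<psi> where \<psi>: "hom C \<psi> P X1" "Comp C \<psi> \<phi> = Idt C X1" "Comp C \<phi> \<psi> = Idt C P"
    using \<phi>(1) unfolding iso_def hom_def by auto
  have univ: "\<exists>!u. hom C u (Dom C x) (Dom C d1) \<and> Comp C d1 u = x \<and> Comp C g1 u = y"
    if h: "x \<in> Arr C \<and> y \<in> Arr C \<and> Dom C x = Dom C y \<and> Cod C x = Dom C g0 \<and> Cod C y = Dom C d1'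
        \<and> Comp C g0 x = Comp C d1' y" for x y
  proof -
    define V where "V = Dom C x"
    have hx: "hom C x V X0" and hy: "hom C y V X1'" using h g0 d1' by (auto simp: hom_def V_def)
    obtain v where v: "hom C v V P" "Comp C \<pi>2 v = x" "Comp C \<pi>1 v = y"
      using pb_ex[OF PBP hx hy] h by metis
    have ex: "hom C (Comp C \<psi> v) V X1 \<and> Comp C d1 (Comp C \<psi> v) = x \<and> Comp C g1 (Comp C \<psi> v) = y"
      using H4 v \<psi> by (simp add: cs hom_def comp_hom flip: \<phi>(2) \<phi>(3) add: appl1[OF \<psi>(3)])
    have un: "u = Comp C \<psi> v" if u: "hom C u V X1" "Comp C d1 u = x" "Comp C g1 u = y" for u
    proof -
      have "Comp C \<phi> u = v"
        apply (rule pb_uniq[OF PBP comp_hom[OF u(1) \<phi>(1)] v(1)])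
        using H4 u v by (simp_all add: cs hom_def appl1[OF \<phi>(2)] appl1[OF \<phi>(3)])
      then have "Comp C \<psi> (Comp C \<phi> u) = Comp C \<psi> v" by simp
      then show ?thesis using H4 u \<psi> by (simp add: cs hom_def appl1[OF \<psi>(2)])
    qed
    show ?thesis using ex un d1 unfolding V_def[symmetric] by (auto simp: hom_def)
  qed
  show ?thesis unfolding is_pullback_def
    using g0 d1' d1 g1 c_d1 univ by (simp add: hom_def)
qed

end
theorem proposition6p1:
  fixes E :: "('o, 'a, 'm) category_scheme"
    and \<Sigma> :: "('a \<times> 'a) set"
    and d0 d1 s0 d0' d1' s0' g1 t1 g0 t0 :: 'a
    and X1 X0 X1' X0' :: 'o
  assumes cat: "is_category E"
    and fc: "finitely_complete E"
    and pc: "point_congruous E \<Sigma>"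
    and malt: "sigma_maltsev E \<Sigma>"
    and G: "reflexive_graph E d0 d1 s0 X1 X0"
    and G': "reflexive_graph E d0' d1' s0' X1' X0'"
    and g1: "hom E g1 X1 X1'" and t1: "hom E t1 X1' X1"
    and g0: "hom E g0 X0 X0'" and t0: "hom E t0 X0' X0"
    and se1: "split_epi E g1 t1" and se0: "split_epi E g0 t0"
    and c_d0: "Comp E d0' g1 = Comp E g0 d0" and c_d1: "Comp E d1' g1 = Comp E g0 d1"
    and c_s0: "Comp E g1 s0 = Comp E s0' g0"
    and ct_d0: "Comp E d0 t1 = Comp E t0 d0'" and ct_d1: "Comp E d1 t1 = Comp E t0 d1'"
    and ct_s0: "Comp E t1 s0' = Comp E s0 t0"
    and sig: "(g0, t0) \<in> \<Sigma>"
    and pb0: "is_pullback E g0 d0' d0 g1"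
  shows "is_pullback E g0 d1' d1 g1"
  proof -
  interpret cat E by unfold_locales (rule cat)
  show ?thesis
    by (rule main[OF fc pc malt G G' g1 t1 g0 t0 se1 se0 c_d0 c_d1 c_s0 ct_d0 ct_d1 sig pb0])
qed

end
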